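(* Let $F\in\mathbb{R}[x_1,\dots,x_n]$ be a form. If there is a positive integer $k$ such that every form in $\mathrm{SDS}^{(k)}(F)$ has all coefficients nonnegative, then $F(X)\ge0$ for all $X\in\mathbb{R}_+^n$. If there is a positive integer $k$ and a form $G\in\mathrm{SDS}^{(k)}(F)$ with $G(1,\dots,1)<0$, then $F$ is not nonnegative on $\mathbb{R}_+^n$ (there is $X\in\mathbb{R}_+^n$ with $F(X)<0$).
   Context: $\mathbb{R}_+^n=\{(x_1,\dots,x_n): x_i\ge0\}$. $W_n$ is the $n\times n$ matrix with $(W_n)_{ij}=1/j$ for $i\le j$ and $0$ for $i>j$. For a permutation $[k_1\cdots k_n]$ of $1,\dots,n$, $P_{[k_1\cdots k_n]}$ is the permutation matrix with $1$ in positions $(i,k_i)$ and $0$ elsewhere, and $B_{[k_1\cdots k_n]}=P_{[k_1\cdots k_n]}W_n$; $PW_n$ denotes the set of these $n!$ matrices. For $m\ge1$, $\mathrm{SDS}^{(m)}(F)$ is the set of forms $F(B_{[\alpha_1]}\cdots B_{[\alpha_m]}X^{\mathrm{Tr}})$, $X=(x_1,\dots,x_n)$, as $B_{[\alpha_1]},\dots,B_{[\alpha_m]}$ range independently over $PW_n$. *)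

theory Defs
  imports Complex_Main "HOL-Library.Poly_Mapping" "HOL-Combinatorics.Permutations"
begin

text \<open>The paper's variables x_1..x_n correspond to indices 0..n-1.\<close>

type_synonym mpoly = "(nat \<Rightarrow>\<^sub>0 nat) \<Rightarrow>\<^sub>0 real"

definition mvar :: "nat \<Rightarrow> mpoly" where
  "mvar i = Poly_Mapping.single (Poly_Mapping.single i 1) 1"

definition mconst :: "real \<Rightarrow> mpoly" where
  "mconst c = Poly_Mapping.single 0 c"

definition mdeg :: "(nat \<Rightarrow>\<^sub>0 nat) \<Rightarrow> nat" where
  "mdeg m = (\<Sum>i\<in>Poly_Mapping.keys m. Poly_Mapping.lookup m i)"

definition is_form :: "nat \<Rightarrow> mpoly \<Rightarrow> bool" where
  "is_form n F \<longleftrightarrow> (\<exists>d. \<forall>m\<in>Poly_Mapping.keys F. Poly_Mapping.keys m \<subseteq> {..<n} \<and> mdeg m = d)"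

definition meval :: "mpoly \<Rightarrow> (nat \<Rightarrow> real) \<Rightarrow> real" where
  "meval F x = (\<Sum>m\<in>Poly_Mapping.keys F. Poly_Mapping.lookup F m * (\<Prod>i\<in>Poly_Mapping.keys m. x i ^ Poly_Mapping.lookup m i))"

definition msubst :: "mpoly \<Rightarrow> (nat \<Rightarrow> mpoly) \<Rightarrow> mpoly" where
  "msubst F g = (\<Sum>m\<in>Poly_Mapping.keys F. mconst (Poly_Mapping.lookup F m) * (\<Prod>i\<in>Poly_Mapping.keys m. g i ^ Poly_Mapping.lookup m i))"

definition W :: "nat \<Rightarrow> nat \<Rightarrow> real" where
  "W i j = (if i \<le> j then 1 / real (j + 1) else 0)"

definition Pmat :: "(nat \<Rightarrow> nat) \<Rightarrow> nat \<Rightarrow> nat \<Rightarrow> real" where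
  "Pmat p i k = (if k = p i then 1 else 0)"

definition mat_mult :: "nat \<Rightarrow> (nat \<Rightarrow> nat \<Rightarrow> real) \<Rightarrow> (nat \<Rightarrow> nat \<Rightarrow> real) \<Rightarrow> nat \<Rightarrow> nat \<Rightarrow> real" where
  "mat_mult n A C i j = (\<Sum>l<n. A i l * C l j)"

definition mat_id :: "nat \<Rightarrow> nat \<Rightarrow> real" where
  "mat_id i j = (if i = j then 1 else 0)"

definition Bmat :: "nat \<Rightarrow> (nat \<Rightarrow> nat) \<Rightarrow> nat \<Rightarrow> nat \<Rightarrow> real" where
  "Bmat n p = mat_mult n (Pmat p) W"

definition Bprod :: "nat \<Rightarrow> (nat \<Rightarrow> nat) list \<Rightarrow> nat \<Rightarrow> nat \<Rightarrow> real" where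
  "Bprod n ps = foldr (\<lambda>p M. mat_mult n (Bmat n p) M) ps mat_id"

text \<open>F(M X^Tr): substitute x_i := sum_j M i j x_j.\<close>
definition mat_subst :: "nat \<Rightarrow> (nat \<Rightarrow> nat \<Rightarrow> real) \<Rightarrow> mpoly \<Rightarrow> mpoly" where
  "mat_subst n M F = msubst F (\<lambda>i. \<Sum>j<n. mconst (M i j) * mvar j)"

definition SDS :: "nat \<Rightarrow> nat \<Rightarrow> mpoly \<Rightarrow> mpoly set" where
  "SDS n k F = {mat_subst n (Bprod n ps) F | ps. length ps = k \<and> (\<forall>p\<in>set ps. p permutes {..<n})}"

end

theory Submission imports Defs begin

definition mono :: "(nat \<Rightarrow>\<^sub>0 nat) \<Rightarrow> (nat \<Rightarrow> real) \<Rightarrow> real" where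
  "mono m x = (\<Prod>i\<in>Poly_Mapping.keys m. x i ^ Poly_Mapping.lookup m i)"

lemma mono_superset:
  assumes "finite S" "Poly_Mapping.keys m \<subseteq> S"
  shows "mono m x = (\<Prod>i\<in>S. x i ^ Poly_Mapping.lookup m i)"
  unfolding mono_def
  by (rule prod.mono_neutral_left) (use assms in \<open>auto simp: in_keys_iff\<close>)

lemma mono_add: "mono (a + b) x = mono a x * mono b x"
proof -
  let ?S = "Poly_Mapping.keys a \<union> Poly_Mapping.keys b"
  have "mono (a+b) x = (\<Prod>i\<in>?S. x i ^ Poly_Mapping.lookup (a+b) i)"
    by (rule mono_superset[OF _ keys_add]) simp
  also have "\<dots> = (\<Prod>i\<in>?S. x i ^ Poly_Mapping.lookup a i) * (\<Prod>i\<in>?S. x i ^ Poly_Mapping.lookup b i)"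
    by (simp add: lookup_add power_add prod.distrib)
  also have "\<dots> = mono a x * mono b x"
    using mono_superset[of ?S a x] mono_superset[of ?S b x] by simp
  finally show ?thesis .
qed

lemma mono_zero[simp]: "mono 0 x = 1" by (simp add: mono_def)

lemma mono_single1: "mono (Poly_Mapping.single i (Suc 0)) x = x i"
  unfolding mono_def by simp

lemma meval_mono: "meval F x = (\<Sum>m\<in>Poly_Mapping.keys F. Poly_Mapping.lookup F m * mono m x)"
  by (simp add: meval_def mono_def)

lemma meval_superset:
  assumes "finite S" "Poly_Mapping.keys p \<subseteq> S"
  shows "meval p x = (\<Sum>m\<in>S. Poly_Mapping.lookup p m * mono m x)"
  unfolding meval_mono
  by (rule sum.mono_neutral_left) (use assms in \<open>auto simp: in_keys_iff\<close>)

lemma meval_add: "meval (p + q) x = meval p x + meval q x"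
proof -
  let ?S = "Poly_Mapping.keys p \<union> Poly_Mapping.keys q"
  have "meval (p+q) x = (\<Sum>m\<in>?S. Poly_Mapping.lookup (p+q) m * mono m x)"
    by (rule meval_superset[OF _ keys_add]) simp
  also have "\<dots> = (\<Sum>m\<in>?S. Poly_Mapping.lookup p m * mono m x) + (\<Sum>m\<in>?S. Poly_Mapping.lookup q m * mono m x)"
    by (simp add: lookup_add distrib_right sum.distrib)
  also have "\<dots> = meval p x + meval q x"
    using meval_superset[of ?S p x] meval_superset[of ?S q x] by simp
  finally show ?thesis .
qed

lemma meval_zero[simp]: "meval 0 x = 0" by (simp add: meval_def)

lemma meval_sum: "meval (sum f I) x = (\<Sum>i\<in>I. meval (f i) x)"
  by (induction I rule: infinite_finite_induct) (auto simp: meval_add)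

lemma meval_single: "meval (Poly_Mapping.single m c) x = c * mono m x"
  by (simp add: meval_mono)

lemma poly_expand: "p = (\<Sum>m\<in>Poly_Mapping.keys p. Poly_Mapping.single m (Poly_Mapping.lookup p m))"
  by (rule poly_mapping_eqI) (simp add: lookup_sum lookup_single when_def in_keys_iff)

lemma meval_mult: "meval (p * q) x = meval p x * meval q x"
proof -
  have "p * q = (\<Sum>a\<in>Poly_Mapping.keys p. \<Sum>b\<in>Poly_Mapping.keys q.
      Poly_Mapping.single a (Poly_Mapping.lookup p a) * Poly_Mapping.single b (Poly_Mapping.lookup q b))"
    by (subst poly_expand[of p], subst poly_expand[of q]) (rule sum_product)
  then have "meval (p*q) x = (\<Sum>a\<in>Poly_Mapping.keys p. \<Sum>b\<in>Poly_Mapping.keys q.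
      (Poly_Mapping.lookup p a * mono a x) * (Poly_Mapping.lookup q b * mono b x))"
    by (simp add: meval_sum mult_single meval_single mono_add mult_ac)
  also have "\<dots> = meval p x * meval q x"
    by (simp add: meval_mono sum_product)
  finally show ?thesis .
qed

lemma meval_one[simp]: "meval 1 x = 1"
  by (simp add: meval_mono)

lemma meval_prod: "meval (prod f I) x = (\<Prod>i\<in>I. meval (f i) x)"
  by (induction I rule: infinite_finite_induct) (auto simp: meval_mult)

lemma meval_power: "meval (p ^ k) x = meval p x ^ k"
  by (induction k) (auto simp: meval_mult)

lemma meval_mconst[simp]: "meval (mconst c) x = c"
  by (simp add: mconst_def meval_single)

lemma meval_mvar[simp]: "meval (mvar i) x = x i"
  by (simp add: mvar_def meval_single mono_single1)

lemma meval_msubst: "meval (msubst F g) x = meval F (\<lambda>i. meval (g i) x)"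
  unfolding msubst_def meval_sum meval_mult meval_prod meval_power meval_mconst
  by (simp add: meval_def)

lemma meval_mat_subst: "meval (mat_subst n M F) x = meval F (\<lambda>i. \<Sum>j<n. M i j * x j)"
  by (simp add: mat_subst_def meval_msubst meval_sum meval_mult)


definition app :: "nat \<Rightarrow> (nat \<Rightarrow> nat \<Rightarrow> real) \<Rightarrow> (nat \<Rightarrow> real) \<Rightarrow> nat \<Rightarrow> real" where
  "app n M y i = (\<Sum>j<n. M i j * y j)"

lemma ifmul: "(if b then 1 else 0) * (y::real) = (if b then y else 0)" by simp

lemma ifmul2: "(if b then a else 0) * (y::real) = (if b then a * y else 0)" by simp

lemma app_mult: "app n (mat_mult n A C) y i = app n A (app n C y) i"
  unfolding app_def mat_mult_def sum_distrib_left sum_distrib_right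
  by (subst sum.swap) (simp add: mult_ac)

lemma app_cong: "(\<And>j. j < n \<Longrightarrow> y j = y' j) \<Longrightarrow> app n M y i = app n M y' i"
  unfolding app_def by simp

lemma Bprod_Cons: "Bprod n (p#ps) = mat_mult n (Bmat n p) (Bprod n ps)"
  by (simp add: Bprod_def)

lemma Bmat_nonneg: "0 \<le> Bmat n p i j"
  unfolding Bmat_def mat_mult_def Pmat_def W_def by (intro sum_nonneg) auto

lemma Bprod_nonneg: "0 \<le> Bprod n ps i j"
proof (induction ps arbitrary: i j)
  case Nil then show ?case by (simp add: Bprod_def mat_id_def)
next
  case (Cons p ps) then show ?case
    unfolding Bprod_Cons mat_mult_def by (intro sum_nonneg mult_nonneg_nonneg Bmat_nonneg) auto
qed

lemma app_Bmat:
  assumes "p permutes {..<n}" "i < n"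
  shows "app n (Bmat n p) y i = (\<Sum>j\<in>{p i..<n}. y j / real (j+1))"
proof -
  have pi: "p i < n" using permutes_in_image[OF assms(1)] assms(2) by auto
  have "app n (Bmat n p) y i = app n (Pmat p) (app n W y) i"
    unfolding Bmat_def app_mult ..
  also have "\<dots> = app n W y (p i)"
    unfolding app_def Pmat_def using pi by (simp add: ifmul sum.delta')
  also have "\<dots> = (\<Sum>j\<in>{j\<in>{..<n}. p i \<le> j}. y j / real (j+1))"
    unfolding app_def W_def ifmul2 by (subst sum.inter_filter) (auto intro!: sum.cong)
  also have "{j\<in>{..<n}. p i \<le> j} = {p i..<n}" by auto
  finally show ?thesis .
qed

lemma sorting_perm:
  fixes x :: "nat \<Rightarrow> real"
  shows "\<exists>p. p permutes {..<n} \<and> (\<forall>i<n. \<forall>j<n. p i \<le> p j \<longrightarrow> x j \<le> x i)"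
proof -
  define rel where "rel j i \<longleftrightarrow> x j > x i \<or> (x j = x i \<and> j < i)" for j i
  define r where "r i = card {j\<in>{..<n}. rel j i}" for i
  define p where "p i = (if i < n then r i else i)" for i
  have lt: "r i < r j" if "rel i j" "i < n" "j < n" for i j
  proof -
    have "{l\<in>{..<n}. rel l i} \<subset> {l\<in>{..<n}. rel l j}"
    proof
      show "{l\<in>{..<n}. rel l i} \<subseteq> {l\<in>{..<n}. rel l j}"
        using that(1) unfolding rel_def by auto
      show "{l\<in>{..<n}. rel l i} \<noteq> {l\<in>{..<n}. rel l j}"
        using that unfolding rel_def by auto
    qed
    then show ?thesis unfolding r_def by (intro psubset_card_mono) auto
  qed
  have tot: "rel i j \<or> rel j i" if "i \<noteq> j" for i j
    using that unfolding rel_def by auto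
  have inj: "inj_on p {..<n}"
  proof (rule inj_onI)
    fix i j assume "i \<in> {..<n}" "j \<in> {..<n}" "p i = p j"
    then show "i = j" using lt tot unfolding p_def by (metis lessThan_iff less_irrefl)
  qed
  have img: "p ` {..<n} \<subseteq> {..<n}"
  proof
    fix k assume "k \<in> p ` {..<n}"
    then obtain i where i: "i < n" "k = r i" unfolding p_def by auto
    have "{j\<in>{..<n}. rel j i} \<subseteq> {..<n} - {i}" unfolding rel_def by auto
    then have "r i \<le> card ({..<n} - {i})" unfolding r_def by (intro card_mono) auto
    also have "\<dots> < n" using i by simp
    finally show "k \<in> {..<n}" using i by simp
  qed
  have "p ` {..<n} = {..<n}" by (rule endo_inj_surj) (use inj img in auto)
  then have "bij_betw p {..<n} {..<n}" using inj by (simp add: bij_betw_def)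
  then have perm: "p permutes {..<n}" by (rule bij_imp_permutes) (simp add: p_def)
  have "x j \<le> x i" if "i < n" "j < n" "p i \<le> p j" for i j
  proof (rule ccontr)
    assume "\<not> x j \<le> x i"
    then have "rel j i" unfolding rel_def by auto
    then have "r j < r i" using lt that by auto
    then show False using that unfolding p_def by auto
  qed
  then show ?thesis using perm by blast
qed

lemma cover1:
  fixes x :: "nat \<Rightarrow> real"
  assumes "\<forall>i<n. 0 \<le> x i"
  shows "\<exists>p y. p permutes {..<n} \<and> (\<forall>j<n. 0 \<le> y j) \<and> (\<forall>i<n. x i = app n (Bmat n p) y i)"
proof -
  obtain p where p: "p permutes {..<n}" and mon: "\<forall>i<n. \<forall>j<n. p i \<le> p j \<longrightarrow> x j \<le> x i"
    using sorting_perm by blast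
  define z where "z k = (if k < n then x (inv p k) else 0)" for k
  define y where "y j = real (j+1) * (z j - z (Suc j))" for j
  have ipn: "inv p k < n" if "k < n" for k
    using permutes_in_image[OF permutes_inv[OF p]] that by auto
  have y_nonneg: "0 \<le> y j" if "j < n" for j
  proof -
    have "z (Suc j) \<le> z j"
    proof (cases "Suc j < n")
      case True
      have "p (inv p j) \<le> p (inv p (Suc j))" by (simp add: permutes_inverses[OF p])
      then have "x (inv p (Suc j)) \<le> x (inv p j)" using mon ipn True that by auto
      then show ?thesis using True that unfolding z_def by auto
    next
      case False
      then show ?thesis using that assms ipn unfolding z_def by auto
    qed
    then show ?thesis unfolding y_def by simp
  qed
  have "x i = app n (Bmat n p) y i" if "i < n" for i
  proof -
    have pi: "p i < n" using permutes_in_image[OF p] that by auto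
    have "app n (Bmat n p) y i = (\<Sum>j\<in>{p i..<n}. z j - z (Suc j))"
      unfolding app_Bmat[OF p that] y_def by (intro sum.cong) auto
    also have "\<dots> = z (p i) - z n"
      using sum_Suc_diff'[of "p i" n "\<lambda>j. - z j"] pi by (simp add: sum_negf)
    also have "\<dots> = x i" unfolding z_def using pi by (simp add: permutes_inverses[OF p])
    finally show ?thesis by simp
  qed
  then show ?thesis using p y_nonneg by blast
qed

lemma cover:
  fixes x :: "nat \<Rightarrow> real"
  assumes "\<forall>i<n. 0 \<le> x i"
  shows "\<exists>ps y. length ps = k \<and> (\<forall>p\<in>set ps. p permutes {..<n}) \<and> (\<forall>j<n. 0 \<le> y j)
     \<and> (\<forall>i<n. x i = app n (Bprod n ps) y i)"
  using assms
proof (induction k arbitrary: x)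
  case 0
  have "\<forall>i<n. x i = app n (Bprod n []) x i"
    by (simp add: Bprod_def app_def mat_id_def ifmul)
  then show ?case using 0 by (intro exI[of _ "[]"] exI[of _ x]) auto
next
  case (Suc k)
  obtain p x' where p: "p permutes {..<n}" and x': "\<forall>j<n. 0 \<le> x' j"
    and xe: "\<forall>i<n. x i = app n (Bmat n p) x' i"
    using cover1[OF Suc.prems] by blast
  obtain ps y where ps: "length ps = k" "\<forall>p\<in>set ps. p permutes {..<n}" "\<forall>j<n. 0 \<le> y j"
    "\<forall>i<n. x' i = app n (Bprod n ps) y i"
    using Suc.IH[OF x'] by blast
  have "x i = app n (Bprod n (p#ps)) y i" if "i < n" for i
    unfolding Bprod_Cons app_mult using xe ps(4) that by (auto intro: app_cong)
  then show ?case using p ps by (intro exI[of _ "p#ps"] exI[of _ y]) auto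
qed


lemma meval_local:
  assumes "is_form n F" "\<And>i. i < n \<Longrightarrow> x i = y i"
  shows "meval F x = meval F y"
proof -
  obtain d where d: "\<forall>m\<in>Poly_Mapping.keys F. Poly_Mapping.keys m \<subseteq> {..<n} \<and> mdeg m = d"
    using assms(1) unfolding is_form_def by blast
  show ?thesis unfolding meval_def
    by (intro sum.cong refl arg_cong2[where f="(*)"] prod.cong) (use d assms(2) in force)
qed

lemma meval_nonneg:
  assumes "\<forall>m. Poly_Mapping.lookup G m \<ge> 0" "\<forall>i. 0 \<le> y i"
  shows "0 \<le> meval G y"
  unfolding meval_def using assms by (intro sum_nonneg mult_nonneg_nonneg prod_nonneg zero_le_power) auto

theorem lemma2p2:
  fixes n :: nat and F :: mpoly
  assumes "is_form n F"
  shows "((\<exists>k::nat. k \<ge> 1 \<and> (\<forall>G\<in>SDS n k F. \<forall>m. Poly_Mapping.lookup G m \<ge> 0))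
           \<longrightarrow> (\<forall>x. (\<forall>i<n. x i \<ge> 0) \<longrightarrow> meval F x \<ge> 0))
         \<and> ((\<exists>k::nat. k \<ge> 1 \<and> (\<exists>G\<in>SDS n k F. meval G (\<lambda>_. 1) < 0))
           \<longrightarrow> (\<exists>x. (\<forall>i<n. x i \<ge> 0) \<and> meval F x < 0))"
proof (intro conjI impI allI)
  fix x :: "nat \<Rightarrow> real"
  assume "\<exists>k::nat. k \<ge> 1 \<and> (\<forall>G\<in>SDS n k F. \<forall>m. Poly_Mapping.lookup G m \<ge> 0)"
  then obtain k where k: "\<forall>G\<in>SDS n k F. \<forall>m. Poly_Mapping.lookup G m \<ge> 0" by blast
  assume x: "\<forall>i<n. x i \<ge> 0"
  obtain ps y where ps: "length ps = k" "\<forall>p\<in>set ps. p permutes {..<n}" "\<forall>j<n. 0 \<le> y j"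
     "\<forall>i<n. x i = app n (Bprod n ps) y i"
    using cover[OF x] by blast
  define y' where "y' j = (if j < n then y j else 0)" for j
  have y': "\<forall>j. 0 \<le> y' j" using ps(3) unfolding y'_def by auto
  let ?G = "mat_subst n (Bprod n ps) F"
  have G: "?G \<in> SDS n k F" unfolding SDS_def using ps by blast
  have "meval ?G y' = meval F (app n (Bprod n ps) y')"
    unfolding meval_mat_subst app_def ..
  also have "\<dots> = meval F x"
    using ps(4) by (intro meval_local[OF assms]) (auto simp: y'_def intro: app_cong)
  finally show "meval F x \<ge> 0" using meval_nonneg[OF _ y'] k G by metis
next
  assume "\<exists>k::nat. k \<ge> 1 \<and> (\<exists>G\<in>SDS n k F. meval G (\<lambda>_. 1) < 0)"
  then obtain k G where G: "G \<in> SDS n k F" "meval G (\<lambda>_. 1) < 0" by blast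
  then obtain ps where ps: "G = mat_subst n (Bprod n ps) F" unfolding SDS_def by blast
  define x where "x i = (\<Sum>j<n. Bprod n ps i j * 1)" for i
  have "meval F x < 0" using G(2) unfolding ps meval_mat_subst x_def .
  moreover have "\<forall>i<n. x i \<ge> 0" unfolding x_def by (auto intro: sum_nonneg Bprod_nonneg)
  ultimately show "\<exists>x. (\<forall>i<n. x i \<ge> 0) \<and> meval F x < 0" by blast
qed

end
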